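(* Let $\boldsymbol{\rho}$ be a $d\times d$ correlation matrix with coarsest partition $G^{\star}$, and let $\widehat{\boldsymbol{\rho}}$ be any real symmetric $d\times d$ matrix. Set $$\tau:=\max_{i,j,l\in[d]}\big|(\widehat\rho_{il}-\widehat\rho_{jl})-(\rho_{il}-\rho_{jl})\big|,\qquad \Delta:=\min_{i\not\sim j}\mathrm{CORD}(i,j)$$ (with $\Delta=+\infty$ if $G^\star$ has a single block). If $\tau\le\varepsilon<\Delta-\tau$, then the PARTITION procedure with inputs $\mathbf{D}=\widehat{\mathrm{CORD}}$ and $\varepsilon$ (with arbitrary tie-breaking in the argmin) outputs $\widehat G=G^{\star}$.
   Context: $[d]=\{1,\dots,d\}$. The coarsest partition $G^\star$ of $[d]$ consists of the equivalence classes of $i\sim j\iff \max_{l\neq i,j}|\rho_{il}-\rho_{jl}|=0$; $i\not\sim j$ means $i,j$ lie in different blocks. $\mathrm{CORD}(i,j):=\max_{l\neq i,j}|\rho_{il}-\rho_{jl}|$ and $\widehat{\mathrm{CORD}}(i,j):=\max_{l\neq i,j}|\widehat\rho_{il}-\widehat\rho_{jl}|$ for $i,j\in[d]$ (in particular both equal $0$ when $i=j$). PARTITION$(\mathbf{D},\varepsilon)$, for a $d\times d$ dissimilarity matrix $\mathbf{D}$ and $\varepsilon>0$: initialize $S=[d]$; while $S\neq\emptyset$: if $|S|=1$, output $S$ as a new block; if $|S|>1$, pick $(i,j)\in\operatorname{argmin}_{i,j\in S,\,i\neq j}\mathbf{D}(i,j)$; if $\mathbf{D}(i,j)>\varepsilon$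 the new block is $\{i\}$, otherwise the new block is $\{k\in S:\min(\mathbf{D}(i,k),\mathbf{D}(j,k))\le\varepsilon\}$; remove the new block from $S$ and repeat. The output $\widehat G$ is the collection of blocks produced. *)

theory Defs
  imports Main "HOL-Library.Extended_Real"
begin

text \<open>Indices [d] are the elements of a finite type 'd (so d = CARD('d) \<ge> 1);
  d x d matrices are functions 'd \<Rightarrow> 'd \<Rightarrow> real.\<close>

definition symmetric_mat :: "('d \<Rightarrow> 'd \<Rightarrow> real) \<Rightarrow> bool" where
  "symmetric_mat A \<longleftrightarrow> (\<forall>i j. A i j = A j i)"

definition correlation_matrix :: "('d::finite \<Rightarrow> 'd \<Rightarrow> real) \<Rightarrow> bool" where
  "correlation_matrix A \<longleftrightarrow> symmetric_mat A \<and> (\<forall>i. A i i = 1) \<and>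
     (\<forall>x::'d \<Rightarrow> real. 0 \<le> (\<Sum>i\<in>UNIV. \<Sum>j\<in>UNIV. x i * A i j * x j))"

definition CORD :: "('d::finite \<Rightarrow> 'd \<Rightarrow> real) \<Rightarrow> 'd \<Rightarrow> 'd \<Rightarrow> real" where
  "CORD A i j = Max (insert 0 {\<bar>A i l - A j l\<bar> | l. l \<noteq> i \<and> l \<noteq> j})"

definition cord_equiv :: "('d::finite \<Rightarrow> 'd \<Rightarrow> real) \<Rightarrow> ('d \<times> 'd) set" where
  "cord_equiv A = {(i, j). CORD A i j = 0}"

definition coarsest_partition :: "('d::finite \<Rightarrow> 'd \<Rightarrow> real) \<Rightarrow> 'd set set" where
  "coarsest_partition A = UNIV // cord_equiv A"

definition Delta :: "('d::finite \<Rightarrow> 'd \<Rightarrow> real) \<Rightarrow> ereal" where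
  "Delta A = (if \<exists>i j. (i, j) \<notin> cord_equiv A
              then ereal (Min {CORD A i j | i j. (i, j) \<notin> cord_equiv A})
              else \<infinity>)"

definition tau :: "('d::finite \<Rightarrow> 'd \<Rightarrow> real) \<Rightarrow> ('d \<Rightarrow> 'd \<Rightarrow> real) \<Rightarrow> real" where
  "tau Ahat A = Max {\<bar>(Ahat i l - Ahat j l) - (A i l - A j l)\<bar> | i j l. True}"

text \<open>One step of PARTITION: from the current set S, the new block B can be
  produced (for some admissible tie-breaking choice of the argmin).\<close>
inductive partition_step :: "('d \<Rightarrow> 'd \<Rightarrow> real) \<Rightarrow> real \<Rightarrow> 'd set \<Rightarrow> 'd set \<Rightarrow> bool"
  for D :: "'d \<Rightarrow> 'd \<Rightarrow> real" and eps :: real where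
  single: "card S = 1 \<Longrightarrow> partition_step D eps S S"
| far: "\<lbrakk>card S > 1; i \<in> S; j \<in> S; i \<noteq> j;
         \<forall>i'\<in>S. \<forall>j'\<in>S. i' \<noteq> j' \<longrightarrow> D i j \<le> D i' j'; D i j > eps\<rbrakk>
        \<Longrightarrow> partition_step D eps S {i}"
| near: "\<lbrakk>card S > 1; i \<in> S; j \<in> S; i \<noteq> j;
         \<forall>i'\<in>S. \<forall>j'\<in>S. i' \<noteq> j' \<longrightarrow> D i j \<le> D i' j'; \<not> D i j > eps\<rbrakk>
        \<Longrightarrow> partition_step D eps S {k\<in>S. min (D i k) (D j k) \<le> eps}"

inductive partition_run :: "('d \<Rightarrow> 'd \<Rightarrow> real) \<Rightarrow> real \<Rightarrow> 'd set \<Rightarrow> 'd set set \<Rightarrow> bool"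
  for D :: "'d \<Rightarrow> 'd \<Rightarrow> real" and eps :: real where
  finished: "partition_run D eps {} {}"
| step: "\<lbrakk>S \<noteq> {}; partition_step D eps S B; partition_run D eps (S - B) G\<rbrakk>
         \<Longrightarrow> partition_run D eps S (insert B G)"

definition PARTITION_output :: "('d::finite \<Rightarrow> 'd \<Rightarrow> real) \<Rightarrow> real \<Rightarrow> 'd set set \<Rightarrow> bool" where
  "PARTITION_output D eps G \<longleftrightarrow> partition_run D eps UNIV G"

end

theory Submission
  imports Defs
begin

lemma CORD_fin: "finite {\<bar>A i l - A j l\<bar> | l. l \<noteq> i \<and> l \<noteq> j}" for A :: "'d::finite \<Rightarrow> 'd \<Rightarrow> real"
  by (rule finite_image_set) simp

lemma CORD_nonneg: "0 \<le> CORD A i j"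
  unfolding CORD_def by (rule Max_ge) (auto simp: CORD_fin)

lemma CORD_ge: "l \<noteq> i \<Longrightarrow> l \<noteq> j \<Longrightarrow> \<bar>A i l - A j l\<bar> \<le> CORD A i j"
  unfolding CORD_def by (rule Max_ge) (auto simp: CORD_fin)

lemma CORD_le:
  assumes "0 \<le> t" "\<And>l. l \<noteq> i \<Longrightarrow> l \<noteq> j \<Longrightarrow> \<bar>A i l - A j l\<bar> \<le> t"
  shows "CORD A i j \<le> t"
  unfolding CORD_def using assms by (subst Max_le_iff) (auto simp: CORD_fin)

lemma CORD_zero_iff: "CORD A i j = 0 \<longleftrightarrow> (\<forall>l. l \<noteq> i \<longrightarrow> l \<noteq> j \<longrightarrow> A i l = A j l)"
proof
  assume h: "CORD A i j = 0"
  show "\<forall>l. l \<noteq> i \<longrightarrow> l \<noteq> j \<longrightarrow> A i l = A j l"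
  proof (intro allI impI)
    fix l assume "l \<noteq> i" "l \<noteq> j"
    from CORD_ge[OF this, of A] h show "A i l = A j l" by simp
  qed
next
  assume "\<forall>l. l \<noteq> i \<longrightarrow> l \<noteq> j \<longrightarrow> A i l = A j l"
  then have "CORD A i j \<le> 0" by (intro CORD_le) auto
  with CORD_nonneg[of A i j] show "CORD A i j = 0" by simp
qed

lemma equiv_cord:
  assumes "symmetric_mat A"
  shows "equiv UNIV (cord_equiv A)"
proof (rule equivI)
  show "cord_equiv A \<subseteq> UNIV \<times> UNIV" by simp
  show "refl (cord_equiv A)" by (auto simp: refl_on_def cord_equiv_def CORD_zero_iff)
  show "sym (cord_equiv A)" by (auto simp: sym_def cord_equiv_def CORD_zero_iff)
  have s: "\<And>a b. A a b = A b a" using assms by (auto simp: symmetric_mat_def)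
  show "trans (cord_equiv A)"
  proof (rule transI)
    fix i j k assume ij: "(i, j) \<in> cord_equiv A" and jk: "(j, k) \<in> cord_equiv A"
    then have h1: "\<And>l. l \<noteq> i \<Longrightarrow> l \<noteq> j \<Longrightarrow> A i l = A j l"
      and h2: "\<And>l. l \<noteq> j \<Longrightarrow> l \<noteq> k \<Longrightarrow> A j l = A k l"
      by (auto simp: cord_equiv_def CORD_zero_iff)
    show "(i, k) \<in> cord_equiv A"
    proof (cases "i = j \<or> j = k")
      case True then show ?thesis using ij jk by auto
    next
      case False
      have "A i l = A k l" if "l \<noteq> i" "l \<noteq> k" for l
      proof (cases "l = j")
        case True
        show ?thesis
        proof (cases "i = k")
          case True then show ?thesis by simp
        next
          case False
          have "A i j = A j i" by (rule s)
          also have "\<dots> = A k i" using h2[of i] \<open>\<not>(i = j \<or> j = k)\<close> False by auto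
          also have "\<dots> = A i k" by (rule s)
          also have "\<dots> = A j k" using h1[of k] \<open>\<not>(i = j \<or> j = k)\<close> False by auto
          also have "\<dots> = A k j" by (rule s)
          finally show ?thesis using True by simp
        qed
      next
        case False
        then show ?thesis using h1 h2 that by metis
      qed
      then show ?thesis by (auto simp: cord_equiv_def CORD_zero_iff)
    qed
  qed
qed

lemma tau_ge: "\<bar>(Ahat i l - Ahat j l) - (A i l - A j l)\<bar> \<le> tau Ahat A"
  for A Ahat :: "'d::finite \<Rightarrow> 'd \<Rightarrow> real"
proof -
  have eq: "{\<bar>(Ahat i l - Ahat j l) - (A i l - A j l)\<bar> | i j l. True}
      = (\<lambda>(i,j,l). \<bar>(Ahat i l - Ahat j l) - (A i l - A j l)\<bar>) ` UNIV"
    by (auto simp: image_iff) (metis case_prod_conv)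
  show ?thesis unfolding tau_def eq by (rule Max_ge) (simp, rule image_eqI[where x="(i,j,l)"], simp_all)
qed

lemma step_block:
  fixes D :: "'d::finite \<Rightarrow> 'd \<Rightarrow> real"
  assumes eqv: "equiv UNIV R" and Diff: "\<And>i k. D i k \<le> eps \<longleftrightarrow> (i,k) \<in> R"
    and cl: "\<forall>x\<in>S. R``{x} \<subseteq> S" and st: "partition_step D eps S B"
  shows "\<exists>x\<in>S. B = R``{x}"
  using st
proof cases
  case single
  then obtain x where "S = {x}" by (meson card_1_singletonE)
  moreover have "x \<in> R``{x}" using eqv by (auto simp: equiv_def refl_on_def)
  ultimately show ?thesis using cl single by auto
next
  case (far i j)
  have "R``{i} = {i}"
  proof
    show "{i} \<subseteq> R``{i}" using eqv by (auto simp: equiv_def refl_on_def)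
    show "R``{i} \<subseteq> {i}"
    proof
      fix k assume k: "k \<in> R``{i}"
      then have "k \<in> S" using cl far by auto
      show "k \<in> {i}"
      proof (rule ccontr)
        assume "k \<notin> {i}"
        then have "D i j \<le> D i k" using far \<open>k \<in> S\<close> by auto
        moreover have "D i k \<le> eps" using Diff k by auto
        ultimately show False using far by auto
      qed
    qed
  qed
  then show ?thesis using far by auto
next
  case (near i j)
  have "D i j \<le> eps" using near by simp
  then have ij: "(i,j) \<in> R" using Diff by blast
  have "B = R``{i}"
  proof -
    have "B = {k\<in>S. (i,k) \<in> R \<or> (j,k) \<in> R}" using near Diff by (auto simp: min_le_iff_disj)
    also have "\<dots> = {k\<in>S. (i,k) \<in> R}"
    proof -
      have tr: "trans R" using eqv by (simp add: equiv_def)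
      show ?thesis using ij transD[OF tr, of i j] by blast
    qed
    also have "\<dots> = R``{i}" using cl near by auto
    finally show ?thesis .
  qed
  then show ?thesis using near by auto
qed

lemma run_correct:
  fixes D :: "'d::finite \<Rightarrow> 'd \<Rightarrow> real"
  assumes eqv: "equiv UNIV R" and Diff: "\<And>i k. D i k \<le> eps \<longleftrightarrow> (i,k) \<in> R"
  shows "partition_run D eps S G \<Longrightarrow> (\<forall>x\<in>S. R``{x} \<subseteq> S) \<Longrightarrow> G = (\<lambda>x. R``{x}) ` S"
proof (induction rule: partition_run.induct)
  case finished
  then show ?case by simp
next
  case (step S B G)
  obtain x where x: "x \<in> S" "B = R``{x}" using step_block[OF eqv Diff step.prems step.hyps(2)] by blast
  have cl: "\<forall>y\<in>S - B. R``{y} \<subseteq> S - B"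
  proof
    fix y assume y: "y \<in> S - B"
    have tr: "trans R" and sy: "sym R" using eqv by (simp_all add: equiv_def)
    have "R``{y} \<inter> R``{x} = {}"
    proof (rule ccontr)
      assume "R``{y} \<inter> R``{x} \<noteq> {}"
      then obtain z where "(y,z) \<in> R" "(x,z) \<in> R" by auto
      then have "(x,y) \<in> R" using tr sy by (meson symD transD)
      then show False using y x by auto
    qed
    then show "R``{y} \<subseteq> S - B" using step.prems y x by auto
  qed
  have G: "G = (\<lambda>x. R``{x}) ` (S - B)" using step.IH cl by simp
  have "insert B G = (\<lambda>x. R``{x}) ` S"
  proof
    show "insert B G \<subseteq> (\<lambda>x. R``{x}) ` S" using G x by auto
    show "(\<lambda>x. R``{x}) ` S \<subseteq> insert B G"
    proof
      fix c assume "c \<in> (\<lambda>x. R``{x}) ` S"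
      then obtain y where y: "y \<in> S" "c = R``{y}" by auto
      show "c \<in> insert B G"
      proof (cases "y \<in> B")
        case True
        then have "(x,y) \<in> R" using x by auto
        then have "R``{y} = R``{x}" using eqv by (metis equiv_class_eq)
        then show ?thesis using x y by simp
      next
        case False then show ?thesis using G y by auto
      qed
    qed
  qed
  then show ?case .
qed

lemma run_exists:
  fixes D :: "'d::finite \<Rightarrow> 'd \<Rightarrow> real"
  assumes Dii: "\<And>i. D i i \<le> eps"
  shows "\<exists>G. partition_run D eps S G"
proof (induction "card S" arbitrary: S rule: less_induct)
  case less
  show ?case
  proof (cases "S = {}")
    case True then show ?thesis by (auto intro: partition_run.finished)
  next
    case ne: False
    have fin: "finite S" by simp
    obtain B where B: "partition_step D eps S B" "B \<inter> S \<noteq> {}" "B \<subseteq> S"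
    proof (cases "card S = 1")
      case True
      have "partition_step D eps S S" using True by (rule partition_step.single)
      then show ?thesis using that[of S] ne by auto
    next
      case False
      then have c: "card S > 1" using ne fin card_gt_0_iff[of S] by linarith
      define P where "P = {(i,j). i \<in> S \<and> j \<in> S \<and> i \<noteq> j}"
      have finP: "finite P" by simp
      have neP: "P \<noteq> {}"
      proof
        assume "P = {}"
        then have "\<forall>i\<in>S. \<forall>j\<in>S. i = j" by (auto simp: P_def)
        then have "card S \<le> 1" using card_le_Suc0_iff_eq[OF fin] by simp
        with c show False by simp
      qed
      define m where "m = Min ((\<lambda>(i,j). D i j) ` P)"
      have "m \<in> (\<lambda>(i,j). D i j) ` P" unfolding m_def using finP neP by (intro Min_in) auto
      then obtain i j where ij: "(i,j) \<in> P" "m = D i j" by auto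
      have mn: "\<forall>i'\<in>S. \<forall>j'\<in>S. i' \<noteq> j' \<longrightarrow> D i j \<le> D i' j'"
      proof (intro ballI impI)
        fix i' j' assume "i' \<in> S" "j' \<in> S" "i' \<noteq> j'"
        then have "(i',j') \<in> P" by (auto simp: P_def)
        then show "D i j \<le> D i' j'" unfolding ij(2)[symmetric] m_def using finP
          by (intro Min_le) force+
      qed
      have iS: "i \<in> S" "j \<in> S" "i \<noteq> j" using ij by (auto simp: P_def)
      show ?thesis
      proof (cases "D i j > eps")
        case True
        then show ?thesis using that[of "{i}"] partition_step.far[OF c iS mn True] iS by auto
      next
        case False
        have "i \<in> {k\<in>S. min (D i k) (D j k) \<le> eps}" using iS Dii[of i] by (auto simp: min_le_iff_disj)
        then show ?thesis using that[of "{k\<in>S. min (D i k) (D j k) \<le> eps}"]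
            partition_step.near[OF c iS mn False] by blast
      qed
    qed
    have "card (S - B) < card S" using B fin by (intro psubset_card_mono) auto
    then obtain G where "partition_run D eps (S - B) G" using less by blast
    then show ?thesis using partition_run.step[OF ne B(1)] by blast
  qed
qed

theorem lemma1:
  fixes \<rho> \<rho>hat :: "'d::finite \<Rightarrow> 'd \<Rightarrow> real" and \<epsilon> :: real
  assumes "correlation_matrix \<rho>"
    and "symmetric_mat \<rho>hat"
    and "0 < \<epsilon>"
    and "tau \<rho>hat \<rho> \<le> \<epsilon>"
    and "ereal \<epsilon> < Delta \<rho> - ereal (tau \<rho>hat \<rho>)"
  shows "(\<exists>G. PARTITION_output (CORD \<rho>hat) \<epsilon> G) \<and>
         (\<forall>G. PARTITION_output (CORD \<rho>hat) \<epsilon> G \<longrightarrow> G = coarsest_partition \<rho>)"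
proof
  have Dii: "\<And>i. CORD \<rho>hat i i \<le> \<epsilon>"
  proof -
    fix i
    have "CORD \<rho>hat i i = 0" by (simp add: CORD_zero_iff)
    then show "CORD \<rho>hat i i \<le> \<epsilon>" using assms(3) by simp
  qed
  show "\<exists>G. PARTITION_output (CORD \<rho>hat) \<epsilon> G"
    unfolding PARTITION_output_def using run_exists[of "CORD \<rho>hat" \<epsilon>] Dii by blast
next
  define R where "R = cord_equiv \<rho>"
  define t where "t = tau \<rho>hat \<rho>"
  have eqv: "equiv UNIV R" unfolding R_def
    using assms(1) by (intro equiv_cord) (simp add: correlation_matrix_def)
  have up: "CORD \<rho>hat i k \<le> CORD \<rho> i k + t" for i k
  proof (rule CORD_le)
    show "0 \<le> CORD \<rho> i k + t" using CORD_nonneg[of \<rho> i k] tau_ge[of \<rho>hat i i i \<rho>]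
      by (simp add: t_def)
    fix l assume "l \<noteq> i" "l \<noteq> k"
    have "\<bar>\<rho>hat i l - \<rho>hat k l\<bar> \<le> \<bar>\<rho> i l - \<rho> k l\<bar> + t"
      using tau_ge[of \<rho>hat i l k \<rho>] unfolding t_def by linarith
    then show "\<bar>\<rho>hat i l - \<rho>hat k l\<bar> \<le> CORD \<rho> i k + t"
      using CORD_ge[OF \<open>l \<noteq> i\<close> \<open>l \<noteq> k\<close>, of \<rho>] by linarith
  qed
  have down: "CORD \<rho> i k \<le> CORD \<rho>hat i k + t" for i k
  proof (rule CORD_le)
    show "0 \<le> CORD \<rho>hat i k + t" using CORD_nonneg[of \<rho>hat i k] tau_ge[of \<rho>hat i i i \<rho>]
      by (simp add: t_def)
    fix l assume "l \<noteq> i" "l \<noteq> k"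
    have "\<bar>\<rho> i l - \<rho> k l\<bar> \<le> \<bar>\<rho>hat i l - \<rho>hat k l\<bar> + t"
      using tau_ge[of \<rho>hat i l k \<rho>] unfolding t_def by linarith
    then show "\<bar>\<rho> i l - \<rho> k l\<bar> \<le> CORD \<rho>hat i k + t"
      using CORD_ge[OF \<open>l \<noteq> i\<close> \<open>l \<noteq> k\<close>, of \<rho>hat] by linarith
  qed
  have Diff: "CORD \<rho>hat i k \<le> \<epsilon> \<longleftrightarrow> (i,k) \<in> R" for i k
  proof
    assume "(i,k) \<in> R"
    then have "CORD \<rho> i k = 0" by (simp add: R_def cord_equiv_def)
    then show "CORD \<rho>hat i k \<le> \<epsilon>" using up[of i k] assms(4) t_def by simp
  next
    assume le: "CORD \<rho>hat i k \<le> \<epsilon>"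
    show "(i,k) \<in> R"
    proof (rule ccontr)
      assume nR: "(i,k) \<notin> R"
      define M where "M = {CORD \<rho> i j | i j. (i, j) \<notin> cord_equiv \<rho>}"
      have "Delta \<rho> = ereal (Min M)" using nR by (auto simp: Delta_def M_def R_def)
      with assms(5) have "\<epsilon> < Min M - t" by (simp add: t_def)
      moreover have "Min M \<le> CORD \<rho> i k"
      proof (rule Min_le)
        have "M = (\<lambda>(i,j). CORD \<rho> i j) ` {(i,j). (i,j) \<notin> cord_equiv \<rho>}"
          by (auto simp: M_def)
        then show "finite M" by simp
        show "CORD \<rho> i k \<in> M" using nR by (auto simp: M_def R_def)
      qed
      ultimately show False using down[of i k] le by linarith
    qed
  qed
  show "\<forall>G. PARTITION_output (CORD \<rho>hat) \<epsilon> G \<longrightarrow> G = coarsest_partition \<rho>"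
  proof (intro allI impI)
    fix G assume "PARTITION_output (CORD \<rho>hat) \<epsilon> G"
    then have "G = (\<lambda>x. R``{x}) ` UNIV"
      unfolding PARTITION_output_def by (intro run_correct[OF eqv Diff]) auto
    then show "G = coarsest_partition \<rho>"
      by (auto simp: coarsest_partition_def quotient_def R_def)
  qed
qed

end
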